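(* Let $G$ be a finite group and let $k$ be an integer with $2 \leq k < d(G)$. Then $G$ is $k$-flexible if and only if $G/\mathrm{Cyc}(G)$ is $k$-flexible.
   Context: For a finite group $H$, $d(H)$ denotes the minimal size of a generating set of $H$. For an integer $1 \leq k \leq d(H)$, a finite group $H$ is called $k$-flexible if for any $x_1,\dots,x_k \in H$ with $d(\langle x_1,\dots,x_k\rangle)=k$ there exist $x_{k+1},\dots,x_{d(H)} \in H$ such that $\langle x_1,\dots,x_{d(H)}\rangle = H$. The cycliciser of $G$ is $\mathrm{Cyc}(G) = \{c \in G \mid \langle c,g\rangle \text{ is cyclic for all } g \in G\}$; it is a normal subgroup of $G$. *)

theory Defs
  imports "HOL-Algebra.Algebra"
begin

definition min_gens :: "('a, 'b) monoid_scheme \<Rightarrow> nat" where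
  "min_gens H = (LEAST n. \<exists>S. S \<subseteq> carrier H \<and> finite S \<and> card S = n
                               \<and> generate H S = carrier H)"

text \<open>k-flexible (only meaningful for 1 <= k <= d(H); these bounds are part of the notion).
  Tuples x_1..x_k are lists of length k.\<close>
definition k_flexible :: "('a, 'b) monoid_scheme \<Rightarrow> nat \<Rightarrow> bool" where
  "k_flexible H k \<longleftrightarrow> 1 \<le> k \<and> k \<le> min_gens H \<and>
     (\<forall>xs. length xs = k \<and> set xs \<subseteq> carrier H
             \<and> min_gens (subgroup_generated H (set xs)) = k
        \<longrightarrow> (\<exists>ys. length ys = min_gens H - k \<and> set ys \<subseteq> carrier H
                  \<and> generate H (set (xs @ ys)) = carrier H))"

definition Cyc :: "('a, 'b) monoid_scheme \<Rightarrow> 'a set" where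
  "Cyc G = {c \<in> carrier G. \<forall>g \<in> carrier G. cyclic_group (subgroup_generated G {c, g})}"

end

theory Submission
  imports Defs "HOL-Computational_Algebra.Primes"
begin


lemma coprime_shift_int:
  fixes a b n :: int
  assumes n: "n \<noteq> 0" and cop: "coprime (gcd a b) n"
  shows "\<exists>t. coprime (a + t*b) n"
proof -
  define P where "P = {p \<in> prime_factors n. \<not> p dvd a}"
  define t where "t = \<Prod>P"
  have finP: "finite P" unfolding P_def by auto
  have "coprime (a + t*b) n"
  proof (rule ccontr)
    assume nc: "\<not> coprime (a + t*b) n"
    have g0: "gcd (a + t*b) n \<noteq> 0" using n by simp
    have gu: "\<not> is_unit (gcd (a + t*b) n)" using nc
      by (simp add: coprime_iff_gcd_eq_1 is_unit_gcd)
    obtain p where p: "p dvd gcd (a + t*b) n" "Factorial_Ring.prime p"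
      using prime_divisor_exists[OF g0 gu] by blast
    have pa: "p dvd a + t*b" and pn: "p dvd n" using p(1) by auto
    show False
    proof (cases "p dvd a")
      case True
      then have "p dvd t*b" using pa by (metis dvd_add_right_iff)
      then have "p dvd t \<or> p dvd b" using p(2) by (simp add: prime_dvd_mult_iff)
      moreover have "\<not> p dvd t"
      proof
        assume "p dvd t"
        then obtain q where q: "q \<in> P" "p dvd q" unfolding t_def
          using prime_dvd_prod_iff[OF finP p(2), of id] by auto
        have "Factorial_Ring.prime q" using q(1) unfolding P_def by auto
        then have "p = q" using primes_dvd_imp_eq p(2) q(2) by blast
        then show False using q(1) True unfolding P_def by auto
      qed
      ultimately have "p dvd b" by blast
      then have "p dvd gcd a b" using True by simp
      then have "is_unit p" using cop pn by (meson coprime_common_divisor)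
      then show False using p(2) by auto
    next
      case False
      then have "p \<in> P" unfolding P_def using p(2) pn n by (auto simp: in_prime_factors_iff)
      then have "p dvd t" unfolding t_def using finP by (metis dvd_prodI id_apply)
      then have "p dvd a" using pa by (metis dvd_add_left_iff dvd_mult2)
      then show False using False by blast
    qed
  qed
  then show ?thesis by blast
qed




context group begin

lemma gen_pow_gcd:
  assumes y: "y \<in> carrier G" and d: "gcd e (int (ord y)) dvd f"
  shows "y [^] f \<in> generate G {y [^] e}"
proof -
  obtain u v where uv: "u * e + v * int (ord y) = gcd e (int (ord y))" using bezout_int by blast
  obtain w where w: "f = gcd e (int (ord y)) * w" using d by blast
  have "y [^] f = y [^] (e * (u * w))"
    unfolding int_pow_eq[OF y] w uv[symmetric]
    by (simp add: algebra_simps)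
  also have "\<dots> = (y [^] e) [^] (u * w)" using y by (simp add: int_pow_pow)
  finally show ?thesis using y by (auto simp: generate_pow)
qed

lemma key_gen:
  assumes fin: "finite (carrier G)" and y: "y \<in> carrier G"
    and x: "x \<in> generate G {y}" and m: "m \<in> generate G {y}"
  shows "\<exists>c \<in> generate G {m}. x \<in> generate G {x \<otimes> c} \<and> m \<in> generate G {x \<otimes> c}"
proof -
  obtain a where a: "x = y [^] (a::int)" using x y by (auto simp: generate_pow)
  obtain b where b: "m = y [^] (b::int)" using m y by (auto simp: generate_pow)
  define n where "n = int (ord y)"
  have n0: "n > 0" unfolding n_def using ord_ge_1[OF fin y] by simp
  define g where "g = gcd (gcd a b) n"
  have g0: "g > 0" unfolding g_def using n0 by simp
  obtain a' where a': "a = g * a'" unfolding g_def by (meson dvd_def gcd_dvd1 dvd_trans)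
  obtain b' where b': "b = g * b'" unfolding g_def by (meson dvd_def gcd_dvd1 gcd_dvd2 dvd_trans)
  obtain n' where n': "n = g * n'" unfolding g_def by (meson dvd_def gcd_dvd2)
  have "gcd (gcd a b) n = gcd (gcd (g*a') (g*b')) (g*n')" using a' b' n' by simp
  also have "\<dots> = g * gcd (gcd a' b') n'" using g0 by (simp add: gcd_mult_left abs_mult)
  finally have "g = g * gcd (gcd a' b') n'" unfolding g_def[symmetric] .
  then have "gcd (gcd a' b') n' = 1" using g0 by simp
  then have cop: "coprime (gcd a' b') n'" by (simp add: coprime_iff_gcd_eq_1)
  have n'0: "n' \<noteq> 0" using n' n0 by auto
  obtain t where t: "coprime (a' + t*b') n'" using coprime_shift_int[OF n'0 cop] by blast
  define c where "c = m [^] t"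
  have mc: "m \<in> carrier G" using m y generate_in_carrier by blast
  have c_in: "c \<in> generate G {m}" unfolding c_def using generate_pow[OF mc] by blast
  have xc: "x \<otimes> c = y [^] (a + b * t)"
    unfolding a c_def b using y by (simp add: int_pow_pow int_pow_mult)
  have gg: "gcd (a + b*t) n = g"
  proof -
    have "gcd (a + b*t) n = gcd (g * (a' + t*b')) (g * n')" unfolding a' b' n'
      by (simp add: algebra_simps)
    also have "\<dots> = g * gcd (a' + t*b') n'" using g0 by (simp add: gcd_mult_left abs_mult)
    also have "\<dots> = g" using t by (simp add: coprime_iff_gcd_eq_1)
    finally show ?thesis .
  qed
  have gd: "gcd (a + b*t) (int (ord y)) = g" using gg n_def by simp
  have "g dvd a" using a' by simp
  then have da: "gcd (a + b*t) (int (ord y)) dvd a" using gd by simp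
  have "x \<in> generate G {x \<otimes> c}" using gen_pow_gcd[OF y da] unfolding xc by (simp add: a)
  moreover have "g dvd b" using b' by simp
  then have db: "gcd (a + b*t) (int (ord y)) dvd b" using gd by simp
  have "m \<in> generate G {x \<otimes> c}" using gen_pow_gcd[OF y db] unfolding xc by (simp add: b)
  ultimately show ?thesis using c_in by blast
qed

lemma sub_cyclic:
  assumes fin: "finite (carrier G)" and y: "y \<in> carrier G"
    and M: "subgroup M G" and My: "M \<subseteq> generate G {y}"
  shows "\<exists>m \<in> M. M = generate G {m}"
proof -
  define B where "B = {b::nat. 0 < b \<and> y [^] b \<in> M}"
  have "ord y \<in> B" unfolding B_def using ord_ge_1[OF fin y] y subgroup.one_closed[OF M]
    by (simp add: pow_ord_eq_1)
  then have B: "(LEAST b. b \<in> B) \<in> B" by (rule LeastI)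
  define b0 where "b0 = (LEAST b. b \<in> B)"
  have b0: "0 < b0" "y [^] b0 \<in> M" using B unfolding b0_def B_def by auto
  define m where "m = y [^] b0"
  have mc: "m \<in> carrier G" unfolding m_def using y by simp
  have "generate G {m} \<subseteq> M" using b0 M unfolding m_def
    by (simp add: generate_subgroup_incl)
  moreover have "M \<subseteq> generate G {m}"
  proof
    fix z assume z: "z \<in> M"
    then have "z \<in> generate G {y}" using My by blast
    then obtain i::nat where i: "z = y [^] i" using generate_pow_on_finite_carrier[OF fin y] by auto
    define q r where "q = i div b0" and "r = i mod b0"
    have iqr: "i = b0 * q + r" unfolding q_def r_def by simp
    have zz: "z = m [^] q \<otimes> y [^] r" unfolding i m_def iqr using y
      by (simp add: nat_pow_mult nat_pow_pow)
    have mq: "m [^] q \<in> M" using subgroup_int_pow_closed[OF M b0(2), of "int q"] y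
      unfolding m_def by (simp add: int_pow_int)
    have "y [^] r = inv (m [^] q) \<otimes> z" using zz mc y
      by (simp add: m_assoc[symmetric])
    then have yr: "y [^] r \<in> M" using mq z M
      by (simp add: subgroup.m_closed subgroup.m_inv_closed)
    have "r = 0"
    proof (rule ccontr)
      assume "r \<noteq> 0"
      then have "r \<in> B" unfolding B_def using yr by simp
      then have "b0 \<le> r" unfolding b0_def by (rule Least_le)
      moreover have "r < b0" unfolding r_def using b0(1) by simp
      ultimately show False by simp
    qed
    then have "z = m [^] (int q)" using zz mc y by (simp add: int_pow_int)
    then show "z \<in> generate G {m}" using mc by (auto simp: generate_pow)
  qed
  ultimately show ?thesis using b0(2) unfolding m_def by blast
qed

end



context group begin

lemma cyclic_sg_iff:
  assumes S: "S \<subseteq> carrier G"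
  shows "cyclic_group (subgroup_generated G S) \<longleftrightarrow> (\<exists>z\<in>carrier G. generate G S = generate G {z})"
proof -
  interpret H: group "subgroup_generated G S" by simp
  have car: "carrier (subgroup_generated G S) = generate G S"
    using S by (simp add: carrier_subgroup_generated Int_absorb1)
  have rng: "range (\<lambda>n::int. x [^]\<^bsub>subgroup_generated G S\<^esub> n) = generate G {x}"
    if "x \<in> carrier (subgroup_generated G S)" for x
  proof -
    have xc: "x \<in> carrier G" using that car generate_incl[OF S] by blast
    have "range (\<lambda>n::int. x [^]\<^bsub>subgroup_generated G S\<^esub> n) = range (\<lambda>n::int. x [^] n)"
      using int_pow_subgroup_generated[OF that] by simp
    also have "\<dots> = generate G {x}" using generate_pow[OF xc] by auto
    finally show ?thesis .
  qed
  show ?thesis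
  proof
    assume "cyclic_group (subgroup_generated G S)"
    then obtain x where x: "x \<in> carrier (subgroup_generated G S)"
      "carrier (subgroup_generated G S) = range (\<lambda>n::int. x [^]\<^bsub>subgroup_generated G S\<^esub> n)"
      using H.cyclic_group by blast
    have xc: "x \<in> carrier G" using x(1) car generate_incl[OF S] by blast
    have "generate G S = generate G {x}" using x(2) rng[OF x(1)] car by simp
    then show "\<exists>z\<in>carrier G. generate G S = generate G {z}" using xc by blast
  next
    assume "\<exists>z\<in>carrier G. generate G S = generate G {z}"
    then obtain z where z: "z \<in> carrier G" "generate G S = generate G {z}" by blast
    have zin: "z \<in> carrier (subgroup_generated G S)" using z car generate.incl[of z "{z}" G] by auto
    show "cyclic_group (subgroup_generated G S)"
      unfolding H.cyclic_group
    proof (rule bexI[OF _ zin])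
      show "carrier (subgroup_generated G S) = range (\<lambda>n::int. z [^]\<^bsub>subgroup_generated G S\<^esub> n)"
        using rng[OF zin] car z(2) by simp
    qed
  qed
qed

lemma gen_single_sub:
  assumes "y \<in> carrier G" shows "subgroup (generate G {y}) G"
  using assms by (simp add: generate_is_subgroup)

lemma cyc_in:
  assumes fin: "finite (carrier G)" and c: "c \<in> carrier G"
    and H: "\<And>g. g \<in> carrier G \<Longrightarrow> \<exists>y\<in>carrier G. c \<in> generate G {y} \<and> g \<in> generate G {y}"
  shows "c \<in> Cyc G"
  unfolding Cyc_def
proof (intro CollectI conjI ballI c)
  fix g assume g: "g \<in> carrier G"
  obtain y where y: "y \<in> carrier G" "c \<in> generate G {y}" "g \<in> generate G {y}" using H[OF g] by blast
  have cg: "{c, g} \<subseteq> carrier G" using c g by auto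
  have "generate G {c, g} \<subseteq> generate G {y}"
    using y by (intro generate_subgroup_incl gen_single_sub) auto
  then obtain m where m: "m \<in> generate G {c, g}" "generate G {c, g} = generate G {m}"
    using sub_cyclic[OF fin y(1) generate_is_subgroup[OF cg]] by blast
  have "m \<in> carrier G" using m(1) generate_incl[OF cg] by blast
  then show "cyclic_group (subgroup_generated G {c, g})"
    using cyclic_sg_iff[OF cg] m(2) by blast
qed

lemma cyc_max:
  assumes fin: "finite (carrier G)" and g: "g \<in> carrier G"
  shows "\<exists>y\<in>carrier G. g \<in> generate G {y} \<and> Cyc G \<subseteq> generate G {y}"
proof -
  define P where "P = (\<lambda>y. y \<in> carrier G \<and> g \<in> generate G {y})"
  have Pg: "P g" unfolding P_def using g generate.incl[of g "{g}" G] by auto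
  have bd: "\<forall>y. P y \<longrightarrow> card (generate G {y}) < card (carrier G) + 1"
  proof (intro allI impI)
    fix y assume "P y"
    then have "generate G {y} \<subseteq> carrier G" unfolding P_def using generate_incl by auto
    then have "card (generate G {y}) \<le> card (carrier G)" by (rule card_mono[OF fin])
    then show "card (generate G {y}) < card (carrier G) + 1" by simp
  qed
  obtain y where y1: "P y" and y2: "\<forall>z. P z \<longrightarrow> card (generate G {z}) \<le> card (generate G {y})"
    using Lattices_Big.ex_has_greatest_nat[of P g "\<lambda>y. card (generate G {y})", OF Pg bd] by (elim exE conjE)
  note y = y1 mp[OF spec[OF y2]]
  have yc: "y \<in> carrier G" and gy: "g \<in> generate G {y}" using y(1) unfolding P_def by auto
  have "Cyc G \<subseteq> generate G {y}"
  proof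
    fix c assume c: "c \<in> Cyc G"
    then have cc: "c \<in> carrier G" and cyc: "cyclic_group (subgroup_generated G {c, y})"
      unfolding Cyc_def using yc by auto
    have cy: "{c, y} \<subseteq> carrier G" using cc yc by auto
    obtain z where z: "z \<in> carrier G" "generate G {c, y} = generate G {z}"
      using cyclic_sg_iff[OF cy] cyc by blast
    have "y \<in> generate G {z}" using z(2) generate.incl[of y "{c,y}" G] by auto
    then have sub: "generate G {y} \<subseteq> generate G {z}"
      using z(1) by (intro generate_subgroup_incl gen_single_sub) auto
    then have "P z" unfolding P_def using z(1) gy by auto
    then have "card (generate G {z}) \<le> card (generate G {y})" by (rule y(2))
    moreover have "finite (generate G {z})" using z(1)
      by (intro finite_subset[OF generate_incl fin]) simp
    ultimately have "generate G {y} = generate G {z}" using card_seteq[OF _ sub] by blast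
    then show "c \<in> generate G {y}" using z(2) generate.incl[of c "{c,y}" G] by auto
  qed
  then show ?thesis using yc gy by blast
qed

lemma cyc_subgroup:
  assumes fin: "finite (carrier G)"
  shows "subgroup (Cyc G) G"
proof (rule subgroupI)
  show "Cyc G \<subseteq> carrier G" unfolding Cyc_def by auto
  have "\<one> \<in> Cyc G"
  proof (rule cyc_in[OF fin one_closed])
    fix g assume g: "g \<in> carrier G"
    obtain y where y: "y \<in> carrier G" "g \<in> generate G {y}" using cyc_max[OF fin g] by blast
    then show "\<exists>y\<in>carrier G. \<one> \<in> generate G {y} \<and> g \<in> generate G {y}"
      using generate.one[of G "{y}"] by blast
  qed
  then show "Cyc G \<noteq> {}" by blast
next
  fix a assume a: "a \<in> Cyc G"
  then have ac: "a \<in> carrier G" unfolding Cyc_def by auto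
  show "inv a \<in> Cyc G"
  proof (rule cyc_in[OF fin inv_closed[OF ac]])
    fix g assume g: "g \<in> carrier G"
    obtain y where y: "y \<in> carrier G" "g \<in> generate G {y}" "Cyc G \<subseteq> generate G {y}"
      using cyc_max[OF fin g] by blast
    have "inv a \<in> generate G {y}" using y a subgroup.m_inv_closed[OF gen_single_sub[OF y(1)]] by auto
    then show "\<exists>y\<in>carrier G. inv a \<in> generate G {y} \<and> g \<in> generate G {y}" using y by blast
  qed
next
  fix a b assume a: "a \<in> Cyc G" and b: "b \<in> Cyc G"
  then have ac: "a \<in> carrier G" and bc: "b \<in> carrier G" unfolding Cyc_def by auto
  show "a \<otimes> b \<in> Cyc G"
  proof (rule cyc_in[OF fin m_closed[OF ac bc]])
    fix g assume g: "g \<in> carrier G"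
    obtain y where y: "y \<in> carrier G" "g \<in> generate G {y}" "Cyc G \<subseteq> generate G {y}"
      using cyc_max[OF fin g] by blast
    have "a \<otimes> b \<in> generate G {y}" using y a b subgroup.m_closed[OF gen_single_sub[OF y(1)]] by auto
    then show "\<exists>y\<in>carrier G. a \<otimes> b \<in> generate G {y} \<and> g \<in> generate G {y}" using y by blast
  qed
qed

lemma gen_comm:
  assumes y: "y \<in> carrier G" and a: "a \<in> generate G {y}" and b: "b \<in> generate G {y}"
  shows "a \<otimes> b = b \<otimes> a"
proof -
  obtain i j :: int where "a = y [^] i" "b = y [^] j" using a b generate_pow[OF y] by auto
  then show ?thesis using int_pow_mult[OF y, of i j] int_pow_mult[OF y, of j i] by (simp add: add.commute)
qed

lemma cyc_normal:
  assumes fin: "finite (carrier G)"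
  shows "Cyc G \<lhd> G"
  unfolding normal_inv_iff
proof (intro conjI ballI cyc_subgroup[OF fin])
  fix x h assume x: "x \<in> carrier G" and h: "h \<in> Cyc G"
  have hc: "h \<in> carrier G" using h unfolding Cyc_def by auto
  obtain y where y: "y \<in> carrier G" "x \<in> generate G {y}" "Cyc G \<subseteq> generate G {y}"
    using cyc_max[OF fin x] by blast
  have "x \<otimes> h = h \<otimes> x" using gen_comm[OF y(1) y(2)] y(3) h by auto
  then have "x \<otimes> h \<otimes> inv x = h" using x hc by (simp add: m_assoc)
  then show "x \<otimes> h \<otimes> inv x \<in> Cyc G" using h by simp
qed

lemma lift_gen:
  assumes fin: "finite (carrier G)" and H: "subgroup H G" and Xg: "Xg \<subseteq> H" and x: "x \<in> Xg"
    and gen: "H \<subseteq> generate G (Xg \<union> (H \<inter> Cyc G))"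
  shows "\<exists>c\<in>H \<inter> Cyc G. \<forall>Y. Y \<subseteq> carrier G \<longrightarrow> Xg - {x} \<subseteq> Y \<longrightarrow> x \<otimes> c \<in> Y \<longrightarrow> H \<subseteq> generate G Y"
proof -
  have xc: "x \<in> carrier G" using x Xg subgroup.subset[OF H] by blast
  obtain y where y: "y \<in> carrier G" "x \<in> generate G {y}" "Cyc G \<subseteq> generate G {y}"
    using cyc_max[OF fin xc] by blast
  have M: "subgroup (H \<inter> Cyc G) G" using subgroups_Inter_pair[OF H cyc_subgroup[OF fin]] .
  obtain m where m: "m \<in> H \<inter> Cyc G" "H \<inter> Cyc G = generate G {m}"
    using sub_cyclic[OF fin y(1) M] y(3) by blast
  have my: "m \<in> generate G {y}" using m(1) y(3) by auto
  obtain c where c: "c \<in> generate G {m}" "x \<in> generate G {x \<otimes> c}" "m \<in> generate G {x \<otimes> c}"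
    using key_gen[OF fin y(1) y(2) my] by blast
  have cM: "c \<in> H \<inter> Cyc G" using c(1) m(2) by auto
  have cc: "c \<in> carrier G" using cM cyc_subgroup[OF fin] subgroup.subset by blast
  have "H \<subseteq> generate G Y" if Y: "Y \<subseteq> carrier G" "Xg - {x} \<subseteq> Y" "x \<otimes> c \<in> Y" for Y
  proof -
    have s1: "generate G {x \<otimes> c} \<subseteq> generate G Y"
      using Y generate.incl[of "x \<otimes> c" Y G]
      by (intro generate_subgroup_incl generate_is_subgroup) auto
    have "m \<in> generate G Y" using c(3) s1 by blast
    then have s2: "H \<inter> Cyc G \<subseteq> generate G Y" unfolding m(2)
      using Y by (intro generate_subgroup_incl generate_is_subgroup) auto
    have s3: "Xg \<subseteq> generate G Y"
    proof
      fix z assume "z \<in> Xg"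
      then show "z \<in> generate G Y"
        using c(2) s1 Y(2) generate.incl[of z Y G] by (cases "z = x") auto
    qed
    have "generate G (Xg \<union> (H \<inter> Cyc G)) \<subseteq> generate G Y"
      using s2 s3 Y by (intro generate_subgroup_incl generate_is_subgroup) auto
    then show ?thesis using gen by blast
  qed
  then show ?thesis using cM by blast
qed

end



definition mg :: "('a, 'b) monoid_scheme \<Rightarrow> 'a set \<Rightarrow> nat" where
  "mg K A = (LEAST n. \<exists>S. S \<subseteq> A \<and> finite S \<and> card S = n \<and> generate K S = A)"

lemma min_gens_mg: "min_gens K = mg K (carrier K)"
  by (simp add: min_gens_def mg_def)

lemma mg_le:
  assumes "S \<subseteq> A" "finite S" "generate K S = A"
  shows "mg K A \<le> card S"
  unfolding mg_def by (rule Least_le) (use assms in blast)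

lemma mg_ex:
  assumes "\<exists>S. S \<subseteq> A \<and> finite S \<and> card S = n \<and> generate K S = A"
  shows "\<exists>S. S \<subseteq> A \<and> finite S \<and> card S = mg K A \<and> generate K S = A"
  unfolding mg_def by (rule LeastI_ex) (use assms in blast)

lemma (in group) mg_witness:
  assumes "subgroup A G" "finite A"
  shows "\<exists>S. S \<subseteq> A \<and> finite S \<and> card S = mg G A \<and> generate G S = A"
proof (rule mg_ex)
  have "generate G A \<subseteq> A" using assms(1) by (simp add: generate_subgroup_incl)
  moreover have "A \<subseteq> generate G A" using generate.incl[of _ A G] by blast
  ultimately show "\<exists>S. S \<subseteq> A \<and> finite S \<and> card S = card A \<and> generate G S = A"
    using assms(2) by blast
qed

lemma (in group) min_gens_sg:
  assumes T: "T \<subseteq> carrier G"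
  shows "min_gens (subgroup_generated G T) = mg G (generate G T)"
proof -
  have car: "carrier (subgroup_generated G T) = generate G T"
    using T by (simp add: carrier_subgroup_generated Int_absorb1)
  have sg: "subgroup_generated G T = G\<lparr>carrier := generate G T\<rparr>"
    using T by (simp add: subgroup_generated_def Int_absorb1)
  have eq: "generate (subgroup_generated G T) S = generate G S" if "S \<subseteq> generate G T" for S
    unfolding sg using generate_consistent[OF that generate_is_subgroup[OF T]] .
  have "(\<lambda>n. \<exists>S. S \<subseteq> carrier (subgroup_generated G T) \<and> finite S \<and> card S = n
           \<and> generate (subgroup_generated G T) S = carrier (subgroup_generated G T))
      = (\<lambda>n. \<exists>S. S \<subseteq> generate G T \<and> finite S \<and> card S = n \<and> generate G S = generate G T)"
    unfolding car
  proof (intro ext iffI)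
    fix n assume "\<exists>S. S \<subseteq> generate G T \<and> finite S \<and> card S = n \<and> generate (subgroup_generated G T) S = generate G T"
    then obtain S where S: "S \<subseteq> generate G T" "finite S" "card S = n" "generate (subgroup_generated G T) S = generate G T" by blast
    then show "\<exists>S. S \<subseteq> generate G T \<and> finite S \<and> card S = n \<and> generate G S = generate G T"
      using eq[OF S(1)] by auto
  next
    fix n assume "\<exists>S. S \<subseteq> generate G T \<and> finite S \<and> card S = n \<and> generate G S = generate G T"
    then obtain S where S: "S \<subseteq> generate G T" "finite S" "card S = n" "generate G S = generate G T" by blast
    then show "\<exists>S. S \<subseteq> generate G T \<and> finite S \<and> card S = n \<and> generate (subgroup_generated G T) S = generate G T"
      using eq[OF S(1)] by auto
  qed
  then show ?thesis unfolding min_gens_def mg_def by simp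
qed

locale cycq = group +
  assumes fin: "finite (carrier G)"
begin

abbreviation "NN \<equiv> Cyc G"
abbreviation "QQ \<equiv> G Mod Cyc G"
abbreviation "pp \<equiv> (\<lambda>a. Cyc G #> a)"

lemma NN_normal: "NN \<lhd> G" using cyc_normal[OF fin] .
lemma NN_sub: "subgroup NN G" using cyc_subgroup[OF fin] .
lemma QQ_group: "group QQ" using normal.factorgroup_is_group[OF NN_normal] .
lemma pp_hom: "group_hom G QQ pp"
  unfolding group_hom_def group_hom_axioms_def
  using is_group QQ_group normal.r_coset_hom_Mod[OF NN_normal] by blast

lemma gen_img: "K \<subseteq> carrier G \<Longrightarrow> generate QQ (pp ` K) = pp ` generate G K"
  using group_hom.generate_img[OF pp_hom] .

lemma car_QQ: "carrier QQ = pp ` carrier G"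
  by (simp add: carrier_FactGroup)

lemma pp_eq: "a \<in> carrier G \<Longrightarrow> b \<in> carrier G \<Longrightarrow> pp a = pp b \<Longrightarrow> a \<otimes> inv b \<in> NN"
  using rcos_self[OF _ NN_sub, of a] subgroup.rcos_module_imp[OF NN_sub is_group, of b a] by simp

lemma pp_one: "a \<in> carrier G \<Longrightarrow> pp a = \<one>\<^bsub>QQ\<^esub> \<Longrightarrow> a \<in> NN"
  using rcos_self[OF _ NN_sub, of a] by (simp add: FactGroup_def)

lemma I1:
  assumes T: "T \<subseteq> carrier G"
  shows "mg QQ (generate QQ (pp ` T)) \<le> mg G (generate G T)"
proof -
  have finH: "finite (generate G T)" using finite_subset[OF generate_incl[OF T] fin] .
  obtain S where S: "S \<subseteq> generate G T" "finite S" "card S = mg G (generate G T)" "generate G S = generate G T"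
    using mg_witness[OF generate_is_subgroup[OF T] finH] by blast
  have Sc: "S \<subseteq> carrier G" using S(1) generate_incl[OF T] by blast
  have "generate QQ (pp ` S) = generate QQ (pp ` T)"
    using gen_img[OF Sc] gen_img[OF T] S(4) by simp
  moreover have "pp ` S \<subseteq> generate QQ (pp ` T)" using gen_img[OF T] S(1) by auto
  ultimately have "mg QQ (generate QQ (pp ` T)) \<le> card (pp ` S)"
    using S(2) by (intro mg_le) auto
  also have "\<dots> \<le> card S" using S(2) by (rule card_image_le)
  finally show ?thesis using S(3) by simp
qed

lemma I2:
  assumes T: "T \<subseteq> carrier G" and two: "2 \<le> mg G (generate G T)"
  shows "mg G (generate G T) \<le> mg QQ (generate QQ (pp ` T))"
proof -
  define H where "H = generate G T"
  have Hsub: "subgroup H G" unfolding H_def using generate_is_subgroup[OF T] .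
  have Hc: "H \<subseteq> carrier G" unfolding H_def using generate_incl[OF T] .
  have finH: "finite H" using finite_subset[OF Hc fin] .
  define Hb where "Hb = generate QQ (pp ` T)"
  have HbH: "Hb = pp ` H" unfolding Hb_def H_def using gen_img[OF T] .
  interpret Q: group QQ using QQ_group .
  have Hbsub: "subgroup Hb QQ" unfolding Hb_def
    using T car_QQ by (intro Q.generate_is_subgroup) auto
  have finHb: "finite Hb" unfolding HbH using finH by simp
  obtain Sb where Sb: "Sb \<subseteq> Hb" "finite Sb" "card Sb = mg QQ Hb" "generate QQ Sb = Hb"
    using Q.mg_witness[OF Hbsub finHb] by blast
  show ?thesis
  proof (cases "Sb = {}")
    case True
    then have "Hb = {\<one>\<^bsub>QQ\<^esub>}" using Sb(4) Q.generate_empty by simp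
    then have e: "pp ` H = {\<one>\<^bsub>QQ\<^esub>}" unfolding HbH .
    have "H \<subseteq> NN"
    proof
      fix h assume h: "h \<in> H"
      then have "pp h \<in> pp ` H" by (rule imageI)
      then have "pp h = \<one>\<^bsub>QQ\<^esub>" using e by blast
      then show "h \<in> NN" using pp_one h Hc by blast
    qed
    moreover obtain y where y: "y \<in> carrier G" "NN \<subseteq> generate G {y}"
      using cyc_max[OF fin one_closed] by blast
    ultimately obtain h where h: "h \<in> H" "H = generate G {h}"
      using sub_cyclic[OF fin y(1) Hsub] by blast
    have "mg G H \<le> card {h}" using h by (intro mg_le) auto
    then show ?thesis using two unfolding H_def by simp
  next
    case False
    define f where "f = (\<lambda>s. SOME h. h \<in> H \<and> pp h = s)"
    have f: "f s \<in> H \<and> pp (f s) = s" if "s \<in> Sb" for s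
    proof -
      have "\<exists>h. h \<in> H \<and> pp h = s" using that Sb(1) HbH by auto
      then show ?thesis unfolding f_def by (rule someI_ex)
    qed
    define Xg where "Xg = f ` Sb"
    have XH: "Xg \<subseteq> H" unfolding Xg_def using f by auto
    have Xc: "Xg \<subseteq> carrier G" using XH Hc by blast
    have pX: "pp ` Xg = Sb" unfolding Xg_def image_image using f by (simp cong: image_cong)
    have finX: "finite Xg" unfolding Xg_def using Sb(2) by simp
    have "card Xg \<le> card Sb" unfolding Xg_def by (rule card_image_le[OF Sb(2)])
    then have cardX: "card Xg \<le> mg QQ Hb" using Sb(3) by simp
    have genX: "generate G Xg \<subseteq> H" using XH Hsub by (simp add: generate_subgroup_incl)
    have HX: "H \<subseteq> generate G (Xg \<union> (H \<inter> NN))"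
    proof
      fix h assume h: "h \<in> H"
      have hc: "h \<in> carrier G" using h Hc by blast
      have "pp h \<in> pp ` generate G Xg" using gen_img[OF Xc] pX Sb(4) HbH h by auto
      then obtain w where w: "w \<in> generate G Xg" "pp h = pp w" by blast
      have wH: "w \<in> H" using w(1) genX by blast
      have wc: "w \<in> carrier G" using wH Hc by blast
      have nN: "h \<otimes> inv w \<in> NN" using pp_eq[OF hc wc w(2)] .
      have nH: "h \<otimes> inv w \<in> H" using h wH Hsub by (simp add: subgroup.m_closed subgroup.m_inv_closed)
      have hh: "h = (h \<otimes> inv w) \<otimes> w" using hc wc by (simp add: m_assoc)
      have "h \<otimes> inv w \<in> generate G (Xg \<union> (H \<inter> NN))"
        using nN nH generate.incl[of "h \<otimes> inv w" "Xg \<union> (H \<inter> NN)" G] by blast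
      moreover have "w \<in> generate G (Xg \<union> (H \<inter> NN))"
        using w(1) mono_generate[of Xg "Xg \<union> (H \<inter> NN)"] by blast
      ultimately have "(h \<otimes> inv w) \<otimes> w \<in> generate G (Xg \<union> (H \<inter> NN))"
        by (rule generate.eng)
      then show "h \<in> generate G (Xg \<union> (H \<inter> NN))" using hh[symmetric] by simp
    qed
    obtain x where x: "x \<in> Xg" using False unfolding Xg_def by blast
    obtain c where c: "c \<in> H \<inter> NN"
      and cY: "\<And>Y. Y \<subseteq> carrier G \<Longrightarrow> Xg - {x} \<subseteq> Y \<Longrightarrow> x \<otimes> c \<in> Y \<Longrightarrow> H \<subseteq> generate G Y"
      using lift_gen[OF fin Hsub XH x HX] by blast
    define Y where "Y = insert (x \<otimes> c) (Xg - {x})"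
    have xcH: "x \<otimes> c \<in> H" using x XH c Hsub by (simp add: subgroup.m_closed subset_iff)
    have YH: "Y \<subseteq> H" unfolding Y_def using xcH XH by blast
    have "H \<subseteq> generate G Y" using YH Hc by (intro cY) (auto simp: Y_def)
    moreover have "generate G Y \<subseteq> H" using YH Hsub by (simp add: generate_subgroup_incl)
    ultimately have gY: "generate G Y = H" by blast
    have finY: "finite Y" unfolding Y_def using finX by simp
    have "card Y \<le> Suc (card (Xg - {x}))" unfolding Y_def using finX
      by (simp add: card_insert_if)
    also have "\<dots> = card Xg"
    proof -
      have "card Xg > 0" using finX x by (auto simp: card_gt_0_iff)
      then show ?thesis using finX x by (simp add: card_Diff_singleton)
    qed
    finally have "card Y \<le> card Xg" .
    moreover have "mg G H \<le> card Y" using YH finY gY by (rule mg_le)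
    ultimately show ?thesis using cardX unfolding H_def Hb_def by simp
  qed
qed

lemma mg_eq:
  assumes T: "T \<subseteq> carrier G" and two: "2 \<le> mg G (generate G T)"
  shows "mg QQ (generate QQ (pp ` T)) = mg G (generate G T)"
  using I1[OF T] I2[OF T two] by simp

end



context cycq begin

lemma gen_carrier: "generate G (carrier G) = carrier G"
  using generate_incl[of "carrier G"] generate.incl[of _ "carrier G" G] by blast

lemma lift_cover:
  assumes Hsub: "subgroup H G" and XH: "Xg \<subseteq> H" and cov: "pp ` H \<subseteq> pp ` generate G Xg"
  shows "H \<subseteq> generate G (Xg \<union> (H \<inter> NN))"
proof
  fix h assume h: "h \<in> H"
  have Hc: "H \<subseteq> carrier G" using subgroup.subset[OF Hsub] .
  have hc: "h \<in> carrier G" using h Hc by blast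
  have genX: "generate G Xg \<subseteq> H" using XH Hsub by (simp add: generate_subgroup_incl)
  have "pp h \<in> pp ` generate G Xg" using cov h by blast
  then obtain w where w: "w \<in> generate G Xg" "pp h = pp w" by blast
  have wH: "w \<in> H" using w(1) genX by blast
  have wc: "w \<in> carrier G" using wH Hc by blast
  have nN: "h \<otimes> inv w \<in> NN" using pp_eq[OF hc wc w(2)] .
  have nH: "h \<otimes> inv w \<in> H" using h wH Hsub by (simp add: subgroup.m_closed subgroup.m_inv_closed)
  have hh: "h = (h \<otimes> inv w) \<otimes> w" using hc wc by (simp add: m_assoc)
  have "h \<otimes> inv w \<in> generate G (Xg \<union> (H \<inter> NN))"
    using nN nH generate.incl[of "h \<otimes> inv w" "Xg \<union> (H \<inter> NN)" G] by blast
  moreover have "w \<in> generate G (Xg \<union> (H \<inter> NN))"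
    using w(1) mono_generate[of Xg "Xg \<union> (H \<inter> NN)"] by blast
  ultimately have "(h \<otimes> inv w) \<otimes> w \<in> generate G (Xg \<union> (H \<inter> NN))"
    by (rule generate.eng)
  then show "h \<in> generate G (Xg \<union> (H \<inter> NN))" using hh[symmetric] by simp
qed

lemma main:
  assumes k2: "2 \<le> k" and kd: "k < min_gens G"
  shows "k_flexible G k \<longleftrightarrow> k_flexible QQ k"
proof -
  interpret Q: group QQ using QQ_group .
  have dG: "min_gens G = mg G (generate G (carrier G))"
    unfolding min_gens_mg gen_carrier ..
  have pc: "pp ` carrier G = carrier QQ" using car_QQ by simp
  have gQ: "generate QQ (carrier QQ) = carrier QQ"
    using Q.generate_incl[of "carrier QQ"] generate.incl[of _ "carrier QQ" QQ] by blast
  have dQ: "min_gens QQ = mg QQ (generate QQ (pp ` carrier G))"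
    unfolding min_gens_mg pc gQ ..
  have eqd: "min_gens QQ = min_gens G"
    unfolding dQ dG using kd k2 dG by (intro mg_eq) auto
  define lf where "lf = (\<lambda>s. SOME a. a \<in> carrier G \<and> pp a = s)"
  have lf: "lf s \<in> carrier G \<and> pp (lf s) = s" if "s \<in> carrier QQ" for s
  proof -
    have "s \<in> pp ` carrier G" using that pc by simp
    then have "\<exists>a. a \<in> carrier G \<and> pp a = s" by blast
    then show ?thesis unfolding lf_def by (rule someI_ex)
  qed
  have lfs: "set (map lf zs) \<subseteq> carrier G \<and> pp ` set (map lf zs) = set zs" if "set zs \<subseteq> carrier QQ" for zs
  proof -
    have l1: "lf s \<in> carrier G" and l2: "pp (lf s) = s" if "s \<in> set zs" for s
      using lf \<open>set zs \<subseteq> carrier QQ\<close> that by blast+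
    have "pp ` set (map lf zs) = (\<lambda>s. pp (lf s)) ` set zs" by (simp add: image_image)
    also have "\<dots> = (\<lambda>s. s) ` set zs" by (rule image_cong) (simp_all add: l2)
    finally have "pp ` set (map lf zs) = set zs" by simp
    moreover have "set (map lf zs) \<subseteq> carrier G" using l1 by auto
    ultimately show ?thesis by blast
  qed
  show ?thesis
  proof
    assume flex: "k_flexible G k"
    show "k_flexible QQ k"
      unfolding k_flexible_def
    proof (intro conjI allI impI)
      show "1 \<le> k" using k2 by simp
      show "k \<le> min_gens QQ" using eqd kd by simp
      fix xsb assume xsb: "length xsb = k \<and> set xsb \<subseteq> carrier QQ
              \<and> min_gens (subgroup_generated QQ (set xsb)) = k"
      define xs where "xs = map lf xsb"
      have xsbc: "set xsb \<subseteq> carrier QQ" using xsb by blast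
      have xs: "set xs \<subseteq> carrier G" "pp ` set xs = set xsb" "length xs = k"
        using lfs[OF xsbc] xsb unfolding xs_def by simp_all
      have "mg QQ (generate QQ (pp ` set xs)) = k"
        using xsb xs(2) Q.min_gens_sg[of "set xsb"] by simp
      then have m1: "k \<le> mg G (generate G (set xs))" using I1[OF xs(1)] by simp
      have "mg G (generate G (set xs)) \<le> card (set xs)"
        using generate.incl[of _ "set xs" G] by (intro mg_le) auto
      also have "\<dots> \<le> length xs" by (rule card_length)
      finally have "min_gens (subgroup_generated G (set xs)) = k"
        using m1 xs(3) min_gens_sg[OF xs(1)] by simp
      then obtain ys where ys: "length ys = min_gens G - k" "set ys \<subseteq> carrier G"
          "generate G (set (xs @ ys)) = carrier G"
        using flex xs unfolding k_flexible_def by blast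
      define ysb where "ysb = map pp ys"
      have "generate QQ (set (xsb @ ysb)) = generate QQ (pp ` set (xs @ ys))"
        using xs(2) unfolding ysb_def by (simp add: image_Un)
      also have "\<dots> = pp ` generate G (set (xs @ ys))" using xs ys by (intro gen_img) auto
      also have "\<dots> = carrier QQ" using ys(3) pc by simp
      finally show "\<exists>ysb. length ysb = min_gens QQ - k \<and> set ysb \<subseteq> carrier QQ
              \<and> generate QQ (set (xsb @ ysb)) = carrier QQ"
        using ys(1,2) eqd pc unfolding ysb_def by (intro exI[of _ "map pp ys"]) auto
    qed
  next
    assume flex: "k_flexible QQ k"
    show "k_flexible G k"
      unfolding k_flexible_def
    proof (intro conjI allI impI)
      show "1 \<le> k" using k2 by simp
      show "k \<le> min_gens G" using kd by simp
      fix xs assume xs: "length xs = k \<and> set xs \<subseteq> carrier G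
              \<and> min_gens (subgroup_generated G (set xs)) = k"
      have xsc: "set xs \<subseteq> carrier G" using xs by simp
      have mk: "mg G (generate G (set xs)) = k" using xs min_gens_sg[OF xsc] by simp
      define xsb where "xsb = map pp xs"
      have sxsb: "set xsb = pp ` set xs" unfolding xsb_def by simp
      have xsbc: "set xsb \<subseteq> carrier QQ" using sxsb xsc car_QQ by auto
      have mQ: "min_gens (subgroup_generated QQ (set xsb)) = k"
        using Q.min_gens_sg[OF xsbc] mg_eq[OF xsc] mk k2 sxsb by simp
      then obtain ysb where ysb: "length ysb = min_gens QQ - k" "set ysb \<subseteq> carrier QQ"
          "generate QQ (set (xsb @ ysb)) = carrier QQ"
      proof -
        have fl: "\<And>zs. length zs = k \<and> set zs \<subseteq> carrier QQ \<and> min_gens (subgroup_generated QQ (set zs)) = k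
            \<Longrightarrow> \<exists>ys. length ys = min_gens QQ - k \<and> set ys \<subseteq> carrier QQ \<and> generate QQ (set (zs @ ys)) = carrier QQ"
          using flex unfolding k_flexible_def by blast
        have "length xsb = k" using xs unfolding xsb_def by simp
        then show ?thesis using fl[of xsb] xsbc mQ that by blast
      qed
      define ys0 where "ys0 = map lf ysb"
      have ys0: "set ys0 \<subseteq> carrier G" "pp ` set ys0 = set ysb" "length ys0 = min_gens G - k"
        using lfs[OF ysb(2)] ysb(1) eqd unfolding ys0_def by simp_all
      then obtain x0 rest where x0: "ys0 = x0 # rest" using kd by (cases ys0) auto
      define Xg where "Xg = set (xs @ ys0)"
      have Xc: "Xg \<subseteq> carrier G" unfolding Xg_def using xsc ys0 by auto
      have "pp ` carrier G = generate QQ (pp ` Xg)"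
        unfolding pc Xg_def using ysb(3) sxsb ys0(2) by (simp add: image_Un)
      also have "\<dots> = pp ` generate G Xg" using gen_img[OF Xc] .
      finally have cov: "pp ` carrier G \<subseteq> pp ` generate G Xg" by simp
      have HX: "carrier G \<subseteq> generate G (Xg \<union> (carrier G \<inter> NN))"
        using lift_cover[OF subgroup_self Xc cov] .
      have x0X: "x0 \<in> Xg" unfolding Xg_def x0 by simp
      obtain c where c: "c \<in> carrier G \<inter> NN"
        and cY: "\<forall>Y. Y \<subseteq> carrier G \<longrightarrow> Xg - {x0} \<subseteq> Y \<longrightarrow> x0 \<otimes> c \<in> Y \<longrightarrow> carrier G \<subseteq> generate G Y"
        using lift_gen[OF fin subgroup_self Xc x0X HX] by blast
      define ys where "ys = (x0 \<otimes> c) # rest"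
      have x0c: "x0 \<in> carrier G" using x0X Xc by blast
      have ysc: "set ys \<subseteq> carrier G" unfolding ys_def using c x0c ys0(1) x0 by auto
      have p1: "set (xs @ ys) \<subseteq> carrier G" using xsc ysc by simp
      have p2: "Xg - {x0} \<subseteq> set (xs @ ys)" unfolding Xg_def ys_def x0 by auto
      have p3: "x0 \<otimes> c \<in> set (xs @ ys)" unfolding ys_def by simp
      have "carrier G \<subseteq> generate G (set (xs @ ys))"
        using cY p1 p2 p3 by blast
      moreover have "generate G (set (xs @ ys)) \<subseteq> carrier G"
        using xsc ysc by (intro generate_incl) auto
      ultimately have "generate G (set (xs @ ys)) = carrier G" by blast
      moreover have "length ys = min_gens G - k" using ys0(3) unfolding ys_def x0 by simp
      ultimately show "\<exists>ys. length ys = min_gens G - k \<and> set ys \<subseteq> carrier G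
              \<and> generate G (set (xs @ ys)) = carrier G" using ysc by blast
    qed
  qed
qed

end

theorem lemma2p4:
  fixes G :: "('a, 'b) monoid_scheme" and k :: nat
  assumes "group G" and "finite (carrier G)"
    and "2 \<le> k" and "k < min_gens G"
  shows "k_flexible G k \<longleftrightarrow> k_flexible (G Mod (Cyc G)) k"
proof -
  interpret cycq G using assms(1,2) by (simp add: cycq_def cycq_axioms_def)
  show ?thesis using main[OF assms(3,4)] .
qed


end
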